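(* Let $q>1$, $p=\frac{q}{q-1}$, and assume Hypothesis (H$_q$). Then for all $x\in[a,b]$ and $\theta>0$, $$\Big|\frac{(x-a)^\theta f(ma)+(b-x)^\theta f(mb)}{b-a}-\frac{\Gamma(\theta+1)}{m^\theta(b-a)}\Big[J^\theta_{(mx)^-}f(ma)+J^\theta_{(mx)^+}f(mb)\Big]\Big|$$ $$\le\frac{m\big(\frac1\theta\beta(p+1,\frac1\theta)\big)^{\frac1p}}{b-a}\Big\{(x-a)^{\theta+1}\Big(\frac{|f'(mx)|^q+\alpha m|f'(a)|^q}{\alpha+1}\Big)^{\frac1q}+(b-x)^{\theta+1}\Big(\frac{|f'(mx)|^q+\alpha m|f'(b)|^q}{\alpha+1}\Big)^{\frac1q}\Big\}.$$
   Context: Let $\Gamma$ denote Euler's Gamma function and $\beta(u,v)=\int_0^1t^{u-1}(1-t)^{v-1}dt$ the Beta function. For $\theta>0$ and $x\in[a,b]$: $J^\theta_{(mx)^-}f(ma)=\frac{1}{\Gamma(\theta)}\int_{ma}^{mx}(s-ma)^{\theta-1}f(s)\,ds$ and $J^\theta_{(mx)^+}f(mb)=\frac{1}{\Gamma(\theta)}\int_{mx}^{mb}(mb-s)^{\theta-1}f(s)\,ds$ (each equal to $0$ if its interval of integration is degenerate). $(\alpha,m)$-convexity: for $(\alpha,m)\in[0,1]\times(0,1]$ and an interval $K\subseteq[0,\infty)$, a function $g:K\to\mathbb{R}$ is $(\alpha,m)$-convex on $K$ if $g(tX+m(1-t)Y)\le t^\alpha g(X)+m(1-t^\alpha)g(Y)$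 for all $X,Y\in K$ and $t\in[0,1]$ with $tX+m(1-t)Y\in K$ (convention $0^0=1$). Hypothesis (H$_q$): $I\subseteq[0,\infty)$ is an interval, $f:I\to\mathbb{R}$ is differentiable on the interior $I^\circ$, $m\in(0,1]$, $\alpha\in[0,1]$, $a<b$ with $ma,b\in I^\circ$, $f'$ is Lebesgue integrable on $[ma,mb]$, and $|f'|^q$ is $(\alpha,m)$-convex on $[ma,b]$. *)

theory Defs
  imports "HOL-Analysis.Analysis"
begin

text \<open>Real power with the convention 0^0 = 1 (Isabelle's powr has 0 powr 0 = 0).\<close>
definition pow00 :: "real \<Rightarrow> real \<Rightarrow> real" where
  "pow00 t s = (if t = 0 \<and> s = 0 then 1 else t powr s)"

definition alpha_m_convex :: "real \<Rightarrow> real \<Rightarrow> real set \<Rightarrow> (real \<Rightarrow> real) \<Rightarrow> bool" where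
  "alpha_m_convex \<alpha> m K g \<longleftrightarrow>
     (\<forall>X\<in>K. \<forall>Y\<in>K. \<forall>t\<in>{0..1}. t * X + m * (1 - t) * Y \<in> K \<longrightarrow>
        g (t * X + m * (1 - t) * Y) \<le> pow00 t \<alpha> * g X + m * (1 - pow00 t \<alpha>) * g Y)"

text \<open>Left Riemann-Liouville type integral J^theta_{(mx)^-} f(ma) and right one J^theta_{(mx)^+} f(mb).\<close>
definition J_left :: "real \<Rightarrow> (real \<Rightarrow> real) \<Rightarrow> real \<Rightarrow> real \<Rightarrow> real" where
  "J_left \<theta> f lo up = (1 / Gamma \<theta>) * (LINT s:{lo..up}|lborel. (s - lo) powr (\<theta> - 1) * f s)"

definition J_right :: "real \<Rightarrow> (real \<Rightarrow> real) \<Rightarrow> real \<Rightarrow> real \<Rightarrow> real" where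
  "J_right \<theta> f lo up = (1 / Gamma \<theta>) * (LINT s:{lo..up}|lborel. (up - s) powr (\<theta> - 1) * f s)"

end

theory Submission
  imports Defs
begin

lemma beta_kernel:
  fixes \<theta> p :: real
  assumes "\<theta> > 0" "p > 0"
  shows "((\<lambda>t. (1 - t powr \<theta>) powr p) has_integral (Beta (p+1) (1/\<theta>) / \<theta>)) {0..1}"
proof -
  let ?f = "\<lambda>t. (1 - t powr \<theta>) powr p"
  let ?g = "\<lambda>w. w powr (1/\<theta>)"
  let ?g' = "\<lambda>w. (1/\<theta>) * w powr (1/\<theta> - 1)"
  have fc: "continuous_on {0..1} ?f"
    using assms by (intro continuous_on_powr' continuous_intros) (auto intro!: powr_le1)
  have gc: "continuous_on {0..1} ?g"
    using assms by (intro continuous_on_powr' continuous_intros) auto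
  have sub: "?g ` {0..1} \<subseteq> {0..1}"
    using assms by (auto intro!: powr_le1)
  have der: "(?g has_field_derivative ?g' w) (at w within {0..1})" if "w \<in> {0..1} - {0}" for w
  proof -
    have "w > 0" using that by auto
    from has_real_derivative_powr[OF this, of "1/\<theta>"] show ?thesis
      by (auto intro: has_field_derivative_at_within)
  qed
  have "((\<lambda>w. ?g' w *\<^sub>R ?f (?g w)) has_integral (integral {?g 0..?g 1} ?f)) {0..1}"
    by (rule has_integral_substitution_strong[where s="{0}", OF _ _ _ sub fc gc der]) (use assms in auto)
  hence h1: "((\<lambda>w. ?g' w *\<^sub>R ?f (?g w)) has_integral (integral {0..1} ?f)) {0..1}"
    using assms by simp
  have eq: "?g' w *\<^sub>R ?f (?g w) = (1/\<theta>) * (w powr (1/\<theta> - 1) * (1 - w) powr (p + 1 - 1))"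
    if "w \<in> {0..1}" for w
    using that assms by (simp add: powr_powr)
  have h2: "((\<lambda>w. (1/\<theta>) * (w powr (1/\<theta> - 1) * (1 - w) powr (p + 1 - 1))) has_integral
           (1/\<theta>) * Beta (1/\<theta>) (p+1)) {0..1}"
    using assms by (intro has_integral_mult_right has_integral_Beta_real) auto
  have "integral {0..1} ?f = (1/\<theta>) * Beta (1/\<theta>) (p+1)"
    using has_integral_unique[OF has_integral_eq[OF eq h1] h2] .
  moreover have "?f integrable_on {0..1}" using fc integrable_continuous_real by blast
  ultimately show ?thesis
    by (metis Beta_commute divide_inverse_commute has_integral_integrable_integral inverse_eq_divide)
qed

lemma holder_aux:
  fixes g h :: "real \<Rightarrow> real" and p q A B :: real
  assumes pq: "p > 1" "q > 1" "1/p + 1/q = 1"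
    and nn: "\<And>x. x \<in> S \<Longrightarrow> g x \<ge> 0" "\<And>x. x \<in> S \<Longrightarrow> h x \<ge> 0"
    and gi: "((\<lambda>x. g x powr p) has_integral A) S" and A: "A > 0"
    and hi: "(\<lambda>x. h x powr q) integrable_on S" and hB: "integral S (\<lambda>x. h x powr q) \<le> B" and B: "B > 0"
    and ghi: "(\<lambda>x. g x * h x) integrable_on S"
  shows "integral S (\<lambda>x. g x * h x) \<le> A powr (1/p) * B powr (1/q)"
proof -
  define a where "a = A powr (1/p)"
  define b where "b = B powr (1/q)"
  have a: "a > 0" "a powr p = A" using A pq by (auto simp: a_def powr_powr)
  have b: "b > 0" "b powr q = B" using B pq by (auto simp: b_def powr_powr)
  have pw: "(g x * h x) / (a * b) \<le> g x powr p / (p * A) + h x powr q / (q * B)" if "x \<in> S" for x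
  proof -
    have "(g x / a) * (h x / b) \<le> (g x / a) powr p / p + (h x / b) powr q / q"
      using Youngs_inequality[OF pq, of "g x / a" "h x / b"] nn[OF that] a b by auto
    also have "\<dots> = g x powr p / (p * A) + h x powr q / (q * B)"
      using nn[OF that] a b by (simp add: powr_divide mult.commute)
    finally show ?thesis by simp
  qed
  have "integral S (\<lambda>x. (g x * h x) / (a * b)) \<le> integral S (\<lambda>x. g x powr p / (p * A) + h x powr q / (q * B))"
    apply (rule integral_le)
    using ghi apply (rule integrable_on_divide)
    apply (intro integrable_add integrable_on_divide)
    using gi hi pw by auto
  also have "\<dots> = A / (p * A) + integral S (\<lambda>x. h x powr q) / (q * B)"
  proof -
    have "integral S (\<lambda>x. g x powr p / (p * A) + h x powr q / (q * B)) =
          integral S (\<lambda>x. g x powr p / (p * A)) + integral S (\<lambda>x. h x powr q / (q * B))"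
      using gi hi by (intro integral_add integrable_on_divide) (auto simp: integrable_on_def)
    also have "integral S (\<lambda>x. g x powr p / (p * A)) = A / (p * A)"
      using gi by (simp add: integral_unique)
    finally show ?thesis by simp
  qed
  also have "\<dots> \<le> 1/p + 1/q"
  proof -
    have "integral S (\<lambda>x. h x powr q) / (q * B) \<le> B / (q * B)"
      using hB B pq by (intro divide_right_mono) auto
    thus ?thesis using A B pq by simp
  qed
  finally have "integral S (\<lambda>x. g x * h x) / (a * b) \<le> 1"
    using pq by (simp add: integral_divide)
  thus ?thesis using a b by (simp add: a_def b_def pos_divide_le_eq)
qed

lemma kernel_int:
  fixes \<theta> p c d :: real
  assumes "\<theta> > 0" "p > 0" "c < d"
  shows "((\<lambda>s. ((d-c) powr \<theta> - (s-c) powr \<theta>) powr p) has_integral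
           (d-c) powr (\<theta>*p+1) * (Beta (p+1) (1/\<theta>) / \<theta>)) {c..d}"
proof -
  let ?k = "\<lambda>s. ((d-c) powr \<theta> - (s-c) powr \<theta>) powr p"
  let ?g = "\<lambda>t. c + (d-c) * t"
  have kc: "continuous_on {c..d} ?k"
    using assms by (intro continuous_on_powr' continuous_intros) (auto intro!: powr_mono2)
  have gc: "continuous_on {0..1} ?g" by (intro continuous_intros)
  have sub: "?g ` {0..1} \<subseteq> {c..d}"
  proof
    fix y assume "y \<in> ?g ` {0..1}"
    then obtain t where t: "0 \<le> t" "t \<le> 1" "y = ?g t" by auto
    have "(d-c) * t \<le> d - c" using t assms by (intro mult_left_le) auto
    moreover have "0 \<le> (d-c) * t" using t assms by simp
    ultimately show "y \<in> {c..d}" using t(3) by (simp only: atLeastAtMost_iff) linarith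
  qed
  have der: "(?g has_field_derivative (d-c)) (at t within {0..1})" if "t \<in> {0..1} - {}" for t
    by (auto intro!: derivative_eq_intros)
  have "((\<lambda>t. (d-c) *\<^sub>R ?k (?g t)) has_integral (integral {?g 0..?g 1} ?k)) {0..1}"
    by (rule has_integral_substitution_strong[where s="{}", OF _ _ _ sub kc gc der]) (use assms in auto)
  hence h1: "((\<lambda>t. (d-c) *\<^sub>R ?k (?g t)) has_integral (integral {c..d} ?k)) {0..1}"
    by simp
  have eq: "(d-c) *\<^sub>R ?k (?g t) = (d-c) powr (\<theta>*p+1) * (1 - t powr \<theta>) powr p" if "t \<in> {0..1}" for t
  proof -
    have t: "0 \<le> t" "t \<le> 1" using that by auto
    have "?k (?g t) = ((d-c) powr \<theta> * (1 - t powr \<theta>)) powr p"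
    proof -
      have "?g t - c = (d-c) * t" by simp
      hence "(?g t - c) powr \<theta> = (d-c) powr \<theta> * t powr \<theta>"
        using t assms by (simp add: powr_mult)
      thus ?thesis by (simp add: algebra_simps)
    qed
    also have "\<dots> = (d-c) powr (\<theta>*p) * (1 - t powr \<theta>) powr p"
      using t assms by (subst powr_mult) (auto intro!: powr_le1 simp: powr_powr)
    finally show ?thesis using assms by (simp add: powr_add)
  qed
  have h2: "((\<lambda>t. (d-c) powr (\<theta>*p+1) * (1 - t powr \<theta>) powr p) has_integral
           (d-c) powr (\<theta>*p+1) * (Beta (p+1) (1/\<theta>) / \<theta>)) {0..1}"
    using assms by (intro has_integral_mult_right beta_kernel) auto
  have "integral {c..d} ?k = (d-c) powr (\<theta>*p+1) * (Beta (p+1) (1/\<theta>) / \<theta>)"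
    using has_integral_unique[OF has_integral_eq[OF eq h1] h2] .
  moreover have "?k integrable_on {c..d}" using kc integrable_continuous_real by blast
  ultimately show ?thesis by (metis has_integral_integrable_integral)
qed

lemma pow_int:
  fixes \<alpha> c d :: real
  assumes "\<alpha> \<ge> 0" "c < d"
  shows "((\<lambda>u. pow00 ((u-c)/(d-c)) \<alpha>) has_integral (d-c)/(\<alpha>+1)) {c..d}"
proof -
  let ?G = "\<lambda>u. (d-c)/(\<alpha>+1) * ((u-c)/(d-c)) powr (\<alpha>+1)"
  have "((\<lambda>u. pow00 ((u-c)/(d-c)) \<alpha>) has_integral (?G d - ?G c)) {c..d}"
  proof (rule fundamental_theorem_of_calculus_interior)
    show "continuous_on {c..d} ?G"
      using assms by (intro continuous_intros continuous_on_powr') auto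
    fix u assume u: "u \<in> {c<..<d}"
    have pos: "(u-c)/(d-c) > 0" using u assms by auto
    have "(?G has_real_derivative (d-c)/(\<alpha>+1) * ((\<alpha>+1) * ((u-c)/(d-c)) powr (\<alpha>+1-1) * (1/(d-c)))) (at u)"
      using pos by (intro derivative_eq_intros refl) auto
    moreover have "(d-c)/(\<alpha>+1) * ((\<alpha>+1) * ((u-c)/(d-c)) powr (\<alpha>+1-1) * (1/(d-c))) = pow00 ((u-c)/(d-c)) \<alpha>"
      using pos assms u by (simp add: pow00_def)
    ultimately show "(?G has_vector_derivative pow00 ((u-c)/(d-c)) \<alpha>) (at u)"
      by (simp add: has_real_derivative_iff_has_vector_derivative)
  qed (use assms in auto)
  thus ?thesis using assms by simp
qed

lemma Beta_pos: "a > 0 \<Longrightarrow> b > 0 \<Longrightarrow> Beta a b > (0::real)"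
  by (simp add: Beta_def)

lemma core:
  fixes h :: "real \<Rightarrow> real" and \<theta> q p \<alpha> m A0 B0 c d :: real
  assumes \<theta>: "\<theta> > 0" and q: "q > 1" and p: "p = q / (q - 1)"
    and \<alpha>: "\<alpha> \<ge> 0" and m: "m \<ge> 0" and A0: "A0 \<ge> 0" and B0: "B0 \<ge> 0" and cd: "c \<le> d"
    and hi: "h absolutely_integrable_on {c..d}"
    and bnd: "\<forall>u\<in>{c..d}. \<bar>h u\<bar> powr q \<le> pow00 ((u-c)/(d-c)) \<alpha> * A0 + m * (1 - pow00 ((u-c)/(d-c)) \<alpha>) * B0"
  shows "\<bar>integral {c..d} (\<lambda>u. ((u-c) powr \<theta> - (d-c) powr \<theta>) * h u)\<bar>
     \<le> (d-c) powr (\<theta>+1) * (Beta (p+1) (1/\<theta>) / \<theta>) powr (1/p) * ((A0 + \<alpha>*m*B0)/(\<alpha>+1)) powr (1/q)"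
proof (cases "c = d")
  case True thus ?thesis by simp
next
  case False
  hence cd: "c < d" using cd by simp
  have p1: "p > 1" using q by (simp add: p)
  have pq: "1/p + 1/q = 1" using q by (simp add: p field_simps)
  define K where "K = Beta (p+1) (1/\<theta>) / \<theta>"
  have K: "K > 0" using \<theta> p1 by (simp add: K_def Beta_pos)
  define Bb where "Bb = (A0 + \<alpha>*m*B0)/(\<alpha>+1)"
  have Bb: "Bb \<ge> 0" using \<alpha> m A0 B0 by (simp add: Bb_def)
  define P where "P = (\<lambda>u. pow00 ((u-c)/(d-c)) \<alpha> * A0 + m * (1 - pow00 ((u-c)/(d-c)) \<alpha>) * B0)"
  define k where "k = (\<lambda>u. (d-c) powr \<theta> - (u-c) powr \<theta>)"
  have k0: "k u \<ge> 0" if "u \<in> {c..d}" for u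
    using that \<theta> by (auto simp: k_def intro!: powr_mono2)
  have kc: "continuous_on {c..d} k"
    using \<theta> unfolding k_def by (intro continuous_intros continuous_on_powr') auto
  have Pi: "(P has_integral (d-c) * Bb) {c..d}"
  proof -
    have pw: "((\<lambda>u. pow00 ((u-c)/(d-c)) \<alpha>) has_integral (d-c)/(\<alpha>+1)) {c..d}"
      using pow_int \<alpha> cd by blast
    have "(P has_integral ((d-c)/(\<alpha>+1) * A0 + (m * B0 * (d-c) - m * B0 * ((d-c)/(\<alpha>+1))))) {c..d}"
    proof -
      have e: "P = (\<lambda>u. pow00 ((u-c)/(d-c)) \<alpha> * A0 + (m * B0 - m * B0 * pow00 ((u-c)/(d-c)) \<alpha>))"
        by (auto simp: P_def algebra_simps)
      show ?thesis unfolding e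
        by (intro has_integral_add has_integral_diff has_integral_mult_left has_integral_mult_right pw)
           (use has_integral_const_real[of "m*B0" c d] cd in \<open>auto simp: mult.commute\<close>)
    qed
    moreover have "(d-c)/(\<alpha>+1) * A0 + (m * B0 * (d-c) - m * B0 * ((d-c)/(\<alpha>+1))) = (d-c) * Bb"
    proof -
      have a1: "\<alpha> + 1 \<noteq> 0" using \<alpha> by simp
      show ?thesis unfolding Bb_def using a1 by (simp add: divide_simps) (simp add: algebra_simps)
    qed
    ultimately show ?thesis by simp
  qed
  have S: "{c..d} \<in> sets lebesgue" by simp
  have hm: "h \<in> borel_measurable (lebesgue_on {c..d})"
    using hi S absolutely_integrable_measurable by blast
  have ahi: "(\<lambda>u. \<bar>h u\<bar>) absolutely_integrable_on {c..d}"
    using hi by (simp add: set_integrable_abs)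
  have hqm: "(\<lambda>u. \<bar>h u\<bar> powr q) \<in> borel_measurable (lebesgue_on {c..d})"
    using hm by measurable
  have hqi: "(\<lambda>u. \<bar>h u\<bar> powr q) integrable_on {c..d}"
    by (rule measurable_bounded_by_integrable_imp_integrable[OF hqm _ _ S])
       (use Pi bnd in \<open>auto simp: P_def integrable_on_def\<close>)
  have hqB: "integral {c..d} (\<lambda>u. \<bar>h u\<bar> powr q) \<le> (d-c) * Bb"
    using integral_le[OF hqi _ , of P] Pi bnd by (auto simp: P_def integrable_on_def integral_unique)
  have kbd: "bounded (k ` {c..d})"
    using kc by (intro compact_imp_bounded compact_continuous_image) auto
  have km: "k \<in> borel_measurable (lebesgue_on {c..d})"
    using kc S by (rule continuous_imp_measurable_on_sets_lebesgue)
  have kahi: "(\<lambda>u. k u * \<bar>h u\<bar>) absolutely_integrable_on {c..d}"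
    by (rule absolutely_integrable_bounded_measurable_product_real[OF km S kbd ahi])
  have khi: "(\<lambda>u. k u * h u) absolutely_integrable_on {c..d}"
    by (rule absolutely_integrable_bounded_measurable_product_real[OF km S kbd hi])
  have "integral {c..d} (\<lambda>u. ((u-c) powr \<theta> - (d-c) powr \<theta>) * h u) = - integral {c..d} (\<lambda>u. k u * h u)"
    by (simp add: k_def algebra_simps flip: integral_neg)
  hence "\<bar>integral {c..d} (\<lambda>u. ((u-c) powr \<theta> - (d-c) powr \<theta>) * h u)\<bar> = \<bar>integral {c..d} (\<lambda>u. k u * h u)\<bar>"
    by simp
  also have "\<dots> \<le> integral {c..d} (\<lambda>u. k u * \<bar>h u\<bar>)"
    using integral_norm_bound_integral[of "\<lambda>u. k u * h u" "{c..d}" "\<lambda>u. k u * \<bar>h u\<bar>"]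
      khi kahi k0 by (auto simp: set_lebesgue_integral_eq_integral abs_mult)
  also have "\<dots> \<le> (d-c) powr (\<theta>+1) * K powr (1/p) * Bb powr (1/q)"
  proof (cases "Bb = 0")
    case True
    have "A0 = 0" "\<alpha> * m * B0 = 0" using True \<alpha> m A0 B0 by (auto simp: Bb_def add_nonneg_eq_0_iff)
    hence "P u = 0" for u
      by (cases "\<alpha> = 0") (auto simp: P_def pow00_def)
    hence "h u = 0" if "u \<in> {c..d}" for u using bnd that q by (auto simp: P_def)
    hence "integral {c..d} (\<lambda>u. k u * \<bar>h u\<bar>) = integral {c..d} (\<lambda>u. 0)"
      by (intro integral_cong) auto
    thus ?thesis by simp
  next
    case False
    hence Bp: "Bb > 0" using Bb by simp
    have "integral {c..d} (\<lambda>u. k u * \<bar>h u\<bar>) \<le> ((d-c) powr (\<theta>*p+1) * K) powr (1/p) * ((d-c) * Bb) powr (1/q)"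
    proof (rule holder_aux[OF p1 q pq])
      show "((\<lambda>u. k u powr p) has_integral (d-c) powr (\<theta>*p+1) * K) {c..d}"
        unfolding k_def K_def using kernel_int[OF \<theta> _ cd, of p] p1 by simp
    qed (use k0 cd K Bp hqi hqB kahi set_lebesgue_integral_eq_integral(1) in auto)
    also have "\<dots> = (d-c) powr (\<theta>+1) * K powr (1/p) * Bb powr (1/q)"
    proof -
      have "((d-c) powr (\<theta>*p+1) * K) powr (1/p) = (d-c) powr (\<theta> + 1/p) * K powr (1/p)"
        using cd K p1 by (simp add: powr_mult powr_powr field_simps)
      moreover have "((d-c) * Bb) powr (1/q) = (d-c) powr (1/q) * Bb powr (1/q)"
        using cd Bp by (simp add: powr_mult)
      moreover have "(d-c) powr (\<theta> + 1/p) * (d-c) powr (1/q) = (d-c) powr (\<theta>+1)"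
        using pq by (simp add: powr_add[symmetric] add.assoc)
      ultimately show ?thesis by (simp add: algebra_simps)
    qed
    finally show ?thesis .
  qed
  finally show ?thesis by (simp add: K_def Bb_def)
qed

lemma ident:
  fixes F F' :: "real \<Rightarrow> real" and \<theta> c d :: real
  assumes \<theta>: "\<theta> > 0" and cd: "c \<le> d"
    and der: "\<And>s. s \<in> {c..d} \<Longrightarrow> (F has_real_derivative F' s) (at s)"
    and F'i: "F' absolutely_integrable_on {c..d}"
  shows "(\<lambda>s. (s-c) powr (\<theta>-1) * F s) absolutely_integrable_on {c..d}"
    and "(d-c) powr \<theta> * F c - \<theta> * integral {c..d} (\<lambda>s. (s-c) powr (\<theta>-1) * F s)
         = integral {c..d} (\<lambda>s. ((s-c) powr \<theta> - (d-c) powr \<theta>) * F' s)"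
proof -
  have S: "{c..d} \<in> sets lebesgue" by simp
  have Fc: "continuous_on {c..d} F"
    using der by (meson DERIV_isCont continuous_at_imp_continuous_on)
  have Fm: "F \<in> borel_measurable (lebesgue_on {c..d})"
    using Fc S by (rule continuous_imp_measurable_on_sets_lebesgue)
  have Fb: "bounded (F ` {c..d})"
    using Fc by (intro compact_imp_bounded compact_continuous_image) auto
  let ?u = "\<lambda>s. (s-c) powr \<theta> - (d-c) powr \<theta>"
  have uc: "continuous_on {c..d} ?u"
    using \<theta> by (intro continuous_intros continuous_on_powr') auto
  have um: "?u \<in> borel_measurable (lebesgue_on {c..d})"
    using uc S by (rule continuous_imp_measurable_on_sets_lebesgue)
  have ub: "bounded (?u ` {c..d})"
    using uc by (intro compact_imp_bounded compact_continuous_image) auto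
  have pwi: "((\<lambda>s. (s-c) powr (\<theta>-1)) has_integral ((d-c) powr \<theta> / \<theta> - (c-c) powr \<theta> / \<theta>)) {c..d}"
  proof (rule fundamental_theorem_of_calculus_interior[OF cd])
    show "continuous_on {c..d} (\<lambda>s. (s-c) powr \<theta> / \<theta>)"
      using \<theta> by (intro continuous_intros continuous_on_powr') auto
    fix s assume s: "s \<in> {c<..<d}"
    have "((\<lambda>s. (s-c) powr \<theta> / \<theta>) has_real_derivative (\<theta> * (s-c) powr (\<theta>-1) * 1) / \<theta>) (at s)"
      using s \<theta> by (intro derivative_eq_intros refl) auto
    thus "((\<lambda>s. (s-c) powr \<theta> / \<theta>) has_vector_derivative (s-c) powr (\<theta>-1)) (at s)"
      using \<theta> by (simp add: has_real_derivative_iff_has_vector_derivative)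
  qed
  have pwa: "(\<lambda>s. (s-c) powr (\<theta>-1)) absolutely_integrable_on {c..d}"
    using pwi by (intro nonnegative_absolutely_integrable_1) (auto simp: integrable_on_def)
  have "(\<lambda>s. F s * (s-c) powr (\<theta>-1)) absolutely_integrable_on {c..d}"
    by (rule absolutely_integrable_bounded_measurable_product_real[OF Fm S Fb pwa])
  thus A: "(\<lambda>s. (s-c) powr (\<theta>-1) * F s) absolutely_integrable_on {c..d}"
    by (simp add: mult.commute)
  have uF'i: "(\<lambda>s. ?u s * F' s) absolutely_integrable_on {c..d}"
    by (rule absolutely_integrable_bounded_measurable_product_real[OF um S ub F'i])
  define I where "I = integral {c..d} (\<lambda>s. ?u s * F' s)"
  have "((\<lambda>s. (\<theta> * (s-c) powr (\<theta>-1)) * F s) has_integral ((d-c) powr \<theta> * F c - I)) {c..d}"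
  proof (rule integration_by_parts_interior_strong[where s="{}", OF bounded_bilinear_mult _ cd uc Fc])
    fix s assume s: "s \<in> {c<..<d} - {}"
    have "(?u has_real_derivative \<theta> * (s-c) powr (\<theta>-1) * 1) (at s)"
      using s by (intro derivative_eq_intros refl) auto
    thus "(?u has_vector_derivative \<theta> * (s-c) powr (\<theta>-1)) (at s)"
      by (simp add: has_real_derivative_iff_has_vector_derivative)
    show "(F has_vector_derivative F' s) (at s)"
      using der[of s] s by (simp add: has_real_derivative_iff_has_vector_derivative)
  next
    have eq: "?u d * F d - ?u c * F c - ((d-c) powr \<theta> * F c - I) = I"
      using \<theta> by simp
    have "((\<lambda>s. ?u s * F' s) has_integral I) {c..d}"
      unfolding I_def by (rule integrable_integral) (rule set_lebesgue_integral_eq_integral(1)[OF uF'i])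
    thus "((\<lambda>s. ?u s * F' s) has_integral ?u d * F d - ?u c * F c - ((d-c) powr \<theta> * F c - I)) {c..d}"
      by (simp only: eq)
  qed (simp_all)
  hence "((\<lambda>s. \<theta> * ((s-c) powr (\<theta>-1) * F s)) has_integral (d-c) powr \<theta> * F c - I) {c..d}"
    by (simp add: mult.assoc)
  hence "integral {c..d} (\<lambda>s. \<theta> * ((s-c) powr (\<theta>-1) * F s)) = (d-c) powr \<theta> * F c - I"
    by (rule integral_unique)
  hence "\<theta> * integral {c..d} (\<lambda>s. (s-c) powr (\<theta>-1) * F s) = (d-c) powr \<theta> * F c - I"
    by (simp only: integral_mult_right)
  thus "(d-c) powr \<theta> * F c - \<theta> * integral {c..d} (\<lambda>s. (s-c) powr (\<theta>-1) * F s)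
         = integral {c..d} (\<lambda>s. ((s-c) powr \<theta> - (d-c) powr \<theta>) * F' s)"
    unfolding I_def by simp
qed

lemma lborel_conv:
  fixes g :: "real \<Rightarrow> real"
  assumes "g absolutely_integrable_on S" "(\<lambda>x. indicator S x *\<^sub>R g x) \<in> borel_measurable borel"
  shows "(LINT x:S|lborel. g x) = integral S g"
proof -
  have "set_integrable lborel S g"
    using assms integrable_completion[of "\<lambda>x. indicator S x *\<^sub>R g x" lborel]
    unfolding set_integrable_def by simp
  thus ?thesis by (rule set_borel_integral_eq_integral(2))
qed

lemma lborel_to_abs:
  fixes g :: "real \<Rightarrow> real"
  assumes "set_integrable lborel S g"
  shows "g absolutely_integrable_on S"
proof -
  have "(\<lambda>x. indicator S x *\<^sub>R g x) \<in> borel_measurable lborel"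
    using assms unfolding set_integrable_def by (rule borel_measurable_integrable)
  thus ?thesis
    using assms integrable_completion[of "\<lambda>x. indicator S x *\<^sub>R g x" lborel]
    unfolding set_integrable_def by simp
qed

lemma meas_ind:
  fixes F w :: "real \<Rightarrow> real"
  assumes "continuous_on {c..d} F" "w \<in> borel_measurable borel"
  shows "(\<lambda>x. indicator {c..d} x *\<^sub>R (w x * F x)) \<in> borel_measurable borel"
proof -
  have "(\<lambda>x. indicator {c..d} x *\<^sub>R F x) \<in> borel_measurable borel"
    by (rule borel_measurable_continuous_on_indicator) (use assms in auto)
  hence "(\<lambda>x. w x * (indicator {c..d} x *\<^sub>R F x)) \<in> borel_measurable borel"
    using assms(2) by measurable
  thus ?thesis by (simp add: ac_simps)
qed


lemma alg1:
  fixes A1 A2 G M J1 J2 d :: real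
  assumes "d \<noteq> 0" "M \<noteq> 0"
  shows "(A1 + A2) / d - G / (M * d) * (J1 + J2) = ((A1 - G / M * J1) + (A2 - G / M * J2)) / d"
  using assms by (simp add: field_simps)

lemma alg2:
  fixes M m X Y K BL BR d :: real
  assumes "M > 0" "d \<noteq> 0"
  shows "(M*m*X*K*BL + M*m*Y*K*BR)/(M*d) = m*K/d*(X*BL + Y*BR)"
  using assms by (simp add: field_simps)

theorem mainTheorem13:
  fixes I :: "real set" and f f' :: "real \<Rightarrow> real"
    and m \<alpha> a b q p x \<theta> :: real
  assumes q: "q > 1" and p: "p = q / (q - 1)"
    and I: "is_interval I" "I \<subseteq> {0..}"
    and deriv: "\<forall>y\<in>interior I. (f has_real_derivative f' y) (at y)"
    and m: "0 < m" "m \<le> 1"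
    and \<alpha>: "0 \<le> \<alpha>" "\<alpha> \<le> 1"
    and ab: "a < b" "m * a \<in> interior I" "b \<in> interior I"
    and integ: "set_integrable lborel {m * a..m * b} f'"
    and conv: "alpha_m_convex \<alpha> m {m * a..b} (\<lambda>y. \<bar>f' y\<bar> powr q)"
    and x: "x \<in> {a..b}"
    and \<theta>: "\<theta> > 0"
  shows "\<bar>((x - a) powr \<theta> * f (m * a) + (b - x) powr \<theta> * f (m * b)) / (b - a)
          - Gamma (\<theta> + 1) / (m powr \<theta> * (b - a))
            * (J_left \<theta> f (m * a) (m * x) + J_right \<theta> f (m * x) (m * b))\<bar>
         \<le> m * ((1 / \<theta>) * Beta (p + 1) (1 / \<theta>)) powr (1 / p) / (b - a)
            * ((x - a) powr (\<theta> + 1)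
                 * ((\<bar>f' (m * x)\<bar> powr q + \<alpha> * m * \<bar>f' a\<bar> powr q) / (\<alpha> + 1)) powr (1 / q)
             + (b - x) powr (\<theta> + 1)
                 * ((\<bar>f' (m * x)\<bar> powr q + \<alpha> * m * \<bar>f' b\<bar> powr q) / (\<alpha> + 1)) powr (1 / q))"
proof -
  have maI: "m * a \<in> I" using ab(2) interior_subset by blast
  have a0: "a \<ge> 0"
  proof -
    have "m * a \<ge> 0" using maI I(2) by auto
    thus ?thesis using m(1) by (simp add: zero_le_mult_iff)
  qed
  have b0: "b > 0" using a0 ab(1) by simp
  have xa: "a \<le> x" "x \<le> b" using x by auto
  have mb_le: "m * b \<le> b" using m b0 by (intro mult_left_le_one_le) auto
  have ma_le: "m * a \<le> a" using m a0 by (intro mult_left_le_one_le) auto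
  have mx1: "m * a \<le> m * x" "m * x \<le> m * b" using xa m by auto
  have "convex (interior I)" using I(1) by (intro convex_interior is_interval_convex)
  hence iI: "is_interval (interior I)" by (simp only: is_interval_convex_1)
  have sub: "{m*a..b} \<subseteq> interior I"
  proof
    fix s assume "s \<in> {m*a..b}"
    hence "m*a \<le> s" "s \<le> b" by auto
    thus "s \<in> interior I" using iI[unfolded is_interval_1, rule_format, OF ab(2) ab(3), of s] by simp
  qed
  have derall: "(f has_real_derivative f' s) (at s)" if "s \<in> {m*a..m*b}" for s
  proof -
    have "s \<in> {m*a..b}" using that mb_le by auto
    hence "s \<in> interior I" using sub by blast
    thus ?thesis using deriv by blast
  qed
  have fc: "continuous_on {m*a..m*b} f"
    using derall by (meson DERIV_isCont continuous_at_imp_continuous_on)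
  have f'abs: "f' absolutely_integrable_on {m*a..m*b}" by (rule lborel_to_abs[OF integ])
  have f'L: "f' absolutely_integrable_on {m*a..m*x}"
    using absolutely_integrable_on_subcbox[OF f'abs, of "m*a" "m*x"] mx1 by auto
  have f'R: "f' absolutely_integrable_on {m*x..m*b}"
    using absolutely_integrable_on_subcbox[OF f'abs, of "m*x" "m*b"] mx1 by auto
  define K where "K = (Beta (p+1) (1/\<theta>) / \<theta>) powr (1/p)"
  define BL where "BL = ((\<bar>f' (m * x)\<bar> powr q + \<alpha> * m * \<bar>f' a\<bar> powr q) / (\<alpha> + 1)) powr (1 / q)"
  define BR where "BR = ((\<bar>f' (m * x)\<bar> powr q + \<alpha> * m * \<bar>f' b\<bar> powr q) / (\<alpha> + 1)) powr (1 / q)"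
  have mt: "m powr \<theta> > 0" using m by simp
  have Gp: "Gamma (\<theta> + 1) = \<theta> * Gamma \<theta>"
    using \<theta> by (intro Gamma_plus1) (auto dest: nonpos_Ints_nonpos)
  have Gt: "Gamma \<theta> > 0" using \<theta> by simp
  define IL where "IL = integral {m*a..m*x} (\<lambda>s. (s - m*a) powr (\<theta>-1) * f s)"
  define LL where "LL = integral {m*a..m*x} (\<lambda>s. ((s - m*a) powr \<theta> - (m*x - m*a) powr \<theta>) * f' s)"
  have L1: "(\<lambda>s. (s - m*a) powr (\<theta>-1) * f s) absolutely_integrable_on {m*a..m*x}"
    and L2: "(m*x - m*a) powr \<theta> * f (m*a) - \<theta> * IL = LL"
  proof -
    have derL: "\<And>s. s \<in> {m*a..m*x} \<Longrightarrow> (f has_real_derivative f' s) (at s)"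
      using derall mx1 by auto
    show "(\<lambda>s. (s - m*a) powr (\<theta>-1) * f s) absolutely_integrable_on {m*a..m*x}"
      using ident(1)[OF \<theta> mx1(1) derL f'L] .
    show "(m*x - m*a) powr \<theta> * f (m*a) - \<theta> * IL = LL"
      using ident(2)[OF \<theta> mx1(1) derL f'L] unfolding IL_def LL_def .
  qed
  have JL: "J_left \<theta> f (m*a) (m*x) = (1 / Gamma \<theta>) * IL"
  proof -
    have "continuous_on {m*a..m*x} f" by (rule continuous_on_subset[OF fc]) (use mx1 in auto)
    hence "(\<lambda>s. indicator {m*a..m*x} s *\<^sub>R ((s - m*a) powr (\<theta>-1) * f s)) \<in> borel_measurable borel"
      by (rule meas_ind) measurable
    thus ?thesis unfolding J_left_def IL_def using lborel_conv[OF L1] by simp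
  qed
  have TL: "(x - a) powr \<theta> * f (m * a) - Gamma (\<theta> + 1) / m powr \<theta> * J_left \<theta> f (m*a) (m*x) = LL / m powr \<theta>"
  proof -
    have "(m*x - m*a) powr \<theta> = m powr \<theta> * (x - a) powr \<theta>"
      using m xa by (simp add: powr_mult flip: right_diff_distrib)
    hence e: "LL / m powr \<theta> = (x - a) powr \<theta> * f (m*a) - \<theta> * IL / m powr \<theta>"
      using mt by (simp flip: L2 add: diff_divide_distrib)
    have "\<theta> * Gamma \<theta> / m powr \<theta> * (1 / Gamma \<theta> * IL) = \<theta> * IL / m powr \<theta>"
      using Gt by simp
    thus ?thesis unfolding JL Gp e by simp
  qed
  define IR where "IR = integral {m*x..m*b} (\<lambda>s. (m*b - s) powr (\<theta>-1) * f s)"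
  define RR where "RR = integral {-(m*b)..-(m*x)} (\<lambda>u. ((u - -(m*b)) powr \<theta> - (-(m*x) - -(m*b)) powr \<theta>) * (- f' (-u)))"
  have derR: "((\<lambda>u. f (-u)) has_real_derivative - f' (-u)) (at u)" if "u \<in> {-(m*b)..-(m*x)}" for u
  proof -
    have "(f has_real_derivative f' (-u)) (at (-u))" using that mx1 by (intro derall) auto
    moreover have "((\<lambda>u. -u) has_real_derivative (-1)) (at u)"
      by (auto intro!: derivative_eq_intros)
    ultimately have "((\<lambda>u. f (-u)) has_real_derivative f' (-u) * (-1)) (at u)"
      by (rule DERIV_chain2)
    thus ?thesis by simp
  qed
  have F'R: "(\<lambda>u. - f' (-u)) absolutely_integrable_on {-(m*b)..-(m*x)}"
  proof -
    have "(\<lambda>u. f' (-u)) absolutely_integrable_on {-(m*b)..-(m*x)}" using f'R by simp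
    hence "(\<lambda>u. (-1) * f' (-u)) absolutely_integrable_on {-(m*b)..-(m*x)}" by (rule set_integrable_mult_right)
    thus ?thesis by simp
  qed
  have mx2: "-(m*b) \<le> -(m*x)" using mx1 by simp
  have R1: "(\<lambda>u. (u - -(m*b)) powr (\<theta>-1) * f (-u)) absolutely_integrable_on {-(m*b)..-(m*x)}"
    and R2: "(-(m*x) - -(m*b)) powr \<theta> * f (-(-(m*b))) - \<theta> * integral {-(m*b)..-(m*x)} (\<lambda>u. (u - -(m*b)) powr (\<theta>-1) * f (-u)) = RR"
  proof -
    show "(\<lambda>u. (u - -(m*b)) powr (\<theta>-1) * f (-u)) absolutely_integrable_on {-(m*b)..-(m*x)}"
      using ident(1)[OF \<theta> mx2 derR F'R] .
    show "(-(m*x) - -(m*b)) powr \<theta> * f (-(-(m*b))) - \<theta> * integral {-(m*b)..-(m*x)} (\<lambda>u. (u - -(m*b)) powr (\<theta>-1) * f (-u)) = RR"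
      using ident(2)[OF \<theta> mx2 derR F'R] unfolding RR_def .
  qed
  have refl_eq: "(\<lambda>u. (u - -(m*b)) powr (\<theta>-1) * f (-u)) = (\<lambda>u. (\<lambda>s. (m*b - s) powr (\<theta>-1) * f s) (-u))"
    by (simp add: add.commute)
  have R1': "(\<lambda>s. (m*b - s) powr (\<theta>-1) * f s) absolutely_integrable_on {m*x..m*b}"
    using absolutely_integrable_reflect_real[where f="\<lambda>s. (m*b - s) powr (\<theta>-1) * f s" and b="m*b" and a="m*x"] R1
    unfolding refl_eq by simp
  have IReq: "integral {-(m*b)..-(m*x)} (\<lambda>u. (u - -(m*b)) powr (\<theta>-1) * f (-u)) = IR"
    unfolding refl_eq IR_def by (rule Henstock_Kurzweil_Integration.integral_reflect_real[where f="\<lambda>s. (m*b - s) powr (\<theta>-1) * f s" and b="m*b" and a="m*x"])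
  have JR: "J_right \<theta> f (m*x) (m*b) = (1 / Gamma \<theta>) * IR"
  proof -
    have "continuous_on {m*x..m*b} f" by (rule continuous_on_subset[OF fc]) (use mx1 in auto)
    hence "(\<lambda>s. indicator {m*x..m*b} s *\<^sub>R ((m*b - s) powr (\<theta>-1) * f s)) \<in> borel_measurable borel"
      by (rule meas_ind) measurable
    thus ?thesis unfolding J_right_def IR_def using lborel_conv[OF R1'] by simp
  qed
  have TR: "(b - x) powr \<theta> * f (m * b) - Gamma (\<theta> + 1) / m powr \<theta> * J_right \<theta> f (m*x) (m*b) = RR / m powr \<theta>"
  proof -
    have h1: "(-(m*x) - -(m*b)) powr \<theta> = m powr \<theta> * (b - x) powr \<theta>"
      using m xa by (simp add: powr_mult flip: right_diff_distrib)
    have R2': "m powr \<theta> * (b - x) powr \<theta> * f (m*b) - \<theta> * IR = RR"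
      using R2[unfolded h1 IReq] by simp
    have e: "RR / m powr \<theta> = (b - x) powr \<theta> * f (m*b) - \<theta> * IR / m powr \<theta>"
      using mt by (simp flip: R2' add: diff_divide_distrib)
    have "\<theta> * Gamma \<theta> / m powr \<theta> * (1 / Gamma \<theta> * IR) = \<theta> * IR / m powr \<theta>"
      using Gt by simp
    thus ?thesis unfolding JR Gp e by simp
  qed
  have mnn: "m \<ge> 0" using m by simp
  have bndL: "\<forall>u\<in>{m*a..m*x}. \<bar>f' u\<bar> powr q \<le> pow00 ((u - m*a)/(m*x - m*a)) \<alpha> * \<bar>f' (m*x)\<bar> powr q
      + m * (1 - pow00 ((u - m*a)/(m*x - m*a)) \<alpha>) * \<bar>f' a\<bar> powr q"
  proof
    fix u assume u: "u \<in> {m*a..m*x}"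
    define t where "t = (u - m*a)/(m*x - m*a)"
    have t01: "t \<in> {0..1}" using u by (auto simp: t_def divide_simps)
    have pt: "t * (m*x) + m * (1 - t) * a = u"
    proof (cases "x = a")
      case True thus ?thesis using u by (simp add: t_def)
    next
      case False
      hence D: "m*x - m*a \<noteq> 0" using m by simp
      have tD: "t * (m*x - m*a) = u - m*a" unfolding t_def using D by simp
      have "t * (m*x) + m * (1 - t) * a = m*a + t * (m*x - m*a)" by (simp add: algebra_simps)
      thus ?thesis using tD by simp
    qed
    have X: "m*x \<in> {m*a..b}" using mx1 mb_le by auto
    have Y: "a \<in> {m*a..b}" using ma_le ab(1) by auto
    have P: "t * (m*x) + m * (1 - t) * a \<in> {m*a..b}" using pt u mx1 mb_le by auto
    from conv[unfolded alpha_m_convex_def, rule_format, OF X Y t01 P]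
    have "\<bar>f' u\<bar> powr q \<le> pow00 t \<alpha> * \<bar>f' (m*x)\<bar> powr q + m * (1 - pow00 t \<alpha>) * \<bar>f' a\<bar> powr q"
      by (simp only: pt)
    thus "\<bar>f' u\<bar> powr q \<le> pow00 ((u - m*a)/(m*x - m*a)) \<alpha> * \<bar>f' (m*x)\<bar> powr q
      + m * (1 - pow00 ((u - m*a)/(m*x - m*a)) \<alpha>) * \<bar>f' a\<bar> powr q"
      by (simp only: t_def)
  qed
  have bL: "\<bar>LL\<bar> \<le> (m*x - m*a) powr (\<theta>+1) * K * BL"
    using core[OF \<theta> q p \<alpha>(1) mnn _ _ mx1(1) f'L bndL] unfolding LL_def K_def BL_def by simp
  have bndR: "\<forall>u\<in>{-(m*b)..-(m*x)}. \<bar>- f' (-u)\<bar> powr q \<le> pow00 ((u - -(m*b))/(-(m*x) - -(m*b))) \<alpha> * \<bar>f' (m*x)\<bar> powr q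
      + m * (1 - pow00 ((u - -(m*b))/(-(m*x) - -(m*b))) \<alpha>) * \<bar>f' b\<bar> powr q"
  proof
    fix u assume u: "u \<in> {-(m*b)..-(m*x)}"
    define t where "t = (u - -(m*b))/(-(m*x) - -(m*b))"
    have t01: "t \<in> {0..1}" using u by (auto simp: t_def divide_simps)
    have pt: "t * (m*x) + m * (1 - t) * b = -u"
    proof (cases "x = b")
      case True thus ?thesis using u by (simp add: t_def)
    next
      case False
      hence D: "-(m*x) - -(m*b) \<noteq> 0" using m by simp
      have tD: "t * (-(m*x) - -(m*b)) = u - -(m*b)" unfolding t_def using D by simp
      have "t * (m*x) + m * (1 - t) * b = m*b - t * (-(m*x) - -(m*b))" by (simp add: algebra_simps)
      thus ?thesis using tD by simp
    qed
    have X: "m*x \<in> {m*a..b}" using mx1 mb_le by auto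
    have Y: "b \<in> {m*a..b}" using ma_le ab(1) by auto
    have P: "t * (m*x) + m * (1 - t) * b \<in> {m*a..b}" using pt u mx1 mb_le by auto
    from conv[unfolded alpha_m_convex_def, rule_format, OF X Y t01 P]
    have "\<bar>f' (-u)\<bar> powr q \<le> pow00 t \<alpha> * \<bar>f' (m*x)\<bar> powr q + m * (1 - pow00 t \<alpha>) * \<bar>f' b\<bar> powr q"
      by (simp only: pt)
    thus "\<bar>- f' (-u)\<bar> powr q \<le> pow00 ((u - -(m*b))/(-(m*x) - -(m*b))) \<alpha> * \<bar>f' (m*x)\<bar> powr q
      + m * (1 - pow00 ((u - -(m*b))/(-(m*x) - -(m*b))) \<alpha>) * \<bar>f' b\<bar> powr q"
      by (simp only: t_def abs_minus_cancel)
  qed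
  have bR: "\<bar>RR\<bar> \<le> (-(m*x) - -(m*b)) powr (\<theta>+1) * K * BR"
    using core[OF \<theta> q p \<alpha>(1) mnn _ _ mx2 F'R bndR] unfolding RR_def K_def BR_def by simp
  have pL: "(m*x - m*a) powr (\<theta>+1) = m powr \<theta> * m * (x-a) powr (\<theta>+1)"
    using m xa by (simp add: powr_mult powr_add flip: right_diff_distrib)
  have pR: "(-(m*x) - -(m*b)) powr (\<theta>+1) = m powr \<theta> * m * (b-x) powr (\<theta>+1)"
    using m xa by (simp add: powr_mult powr_add flip: right_diff_distrib)
  have ba: "b - a \<noteq> 0" "b - a > 0" using ab(1) by auto
  have Md: "m powr \<theta> * (b - a) > 0" using mt ba by simp
  have "((x - a) powr \<theta> * f (m * a) + (b - x) powr \<theta> * f (m * b)) / (b - a)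
          - Gamma (\<theta> + 1) / (m powr \<theta> * (b - a))
            * (J_left \<theta> f (m * a) (m * x) + J_right \<theta> f (m * x) (m * b))
        = (LL / m powr \<theta> + RR / m powr \<theta>) / (b - a)"
  proof -
    have mne: "m powr \<theta> \<noteq> 0" using mt by simp
    show ?thesis by (simp only: alg1[OF ba(1) mne] TL TR)
  qed
  also have "\<dots> = (LL + RR) / (m powr \<theta> * (b - a))"
    by (simp add: add_divide_distrib)
  finally have E: "\<bar>((x - a) powr \<theta> * f (m * a) + (b - x) powr \<theta> * f (m * b)) / (b - a)
          - Gamma (\<theta> + 1) / (m powr \<theta> * (b - a))
            * (J_left \<theta> f (m * a) (m * x) + J_right \<theta> f (m * x) (m * b))\<bar>
        = \<bar>LL + RR\<bar> / (m powr \<theta> * (b - a))" using Md by simp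
  also have "\<dots> \<le> (\<bar>LL\<bar> + \<bar>RR\<bar>) / (m powr \<theta> * (b - a))"
    using Md by (intro divide_right_mono abs_triangle_ineq) auto
  also have "\<dots> \<le> (m powr \<theta> * m * (x-a) powr (\<theta>+1) * K * BL + m powr \<theta> * m * (b-x) powr (\<theta>+1) * K * BR) / (m powr \<theta> * (b - a))"
    using Md bL bR unfolding pL pR by (intro divide_right_mono add_mono) auto
  also have "\<dots> = m * K / (b - a) * ((x-a) powr (\<theta>+1) * BL + (b-x) powr (\<theta>+1) * BR)"
    by (rule alg2[OF mt ba(1)])
  also have "\<dots> = m * ((1 / \<theta>) * Beta (p + 1) (1 / \<theta>)) powr (1 / p) / (b - a)
            * ((x - a) powr (\<theta> + 1)
                 * ((\<bar>f' (m * x)\<bar> powr q + \<alpha> * m * \<bar>f' a\<bar> powr q) / (\<alpha> + 1)) powr (1 / q)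
             + (b - x) powr (\<theta> + 1)
                 * ((\<bar>f' (m * x)\<bar> powr q + \<alpha> * m * \<bar>f' b\<bar> powr q) / (\<alpha> + 1)) powr (1 / q))"
    unfolding K_def BL_def BR_def by simp
  finally show ?thesis .
qed


end
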